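(* Let $(\alpha_n)_{n\in\mathbb N}$, $(\beta_n)_{n\in\mathbb N}$ be arcs in $\mathbb R^2$ such that: (i) for some $R$, $\alpha_n,\beta_n\subset B_R(0)$ and $\alpha_n\cap\beta_n=\emptyset$ for all $n$; (ii) $\alpha_n\to\mathcal L_1$ and $\beta_n\to\mathcal L_2$ in the Hausdorff metric; (iii) $\alpha_n(0),\beta_n(0)\to x_0$ and $\alpha_n(1),\beta_n(1)\to x_1$ with $x_0\neq x_1$. Then either $[\mathcal L_1\cap\mathcal L_2]_{x_0}=[\mathcal L_1\cap\mathcal L_2]_{x_1}$, or $\partial(\mathcal L_1\cup\mathcal L_2)$ separates $\mathbb R^2$.
   Context: An arc is an injective continuous map $[0,1]\to\mathbb R^2$, identified with its image. For $X\subset\mathbb R^2$ and $y\in X$, $[X]_y$ is the connected component of $X$ containing $y$. A set separates $\mathbb R^2$ if its complement is disconnected. *)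

theory Defs
  imports "HOL-Analysis.Analysis"
begin

text \<open>Hausdorff distance between nonempty bounded sets (as in HOL Light's hausdist);
  on nonempty compact sets this is the Hausdorff metric.  \<close>
definition hausdist :: "'a::metric_space set \<Rightarrow> 'a set \<Rightarrow> real" where
  "hausdist S T =
     (if S \<noteq> {} \<and> T \<noteq> {} \<and> bounded S \<and> bounded T
      then max (SUP x\<in>S. infdist x T) (SUP y\<in>T. infdist y S) else 0)"

end

theory Submission
  imports Defs
begin

lemma hd1:
  fixes S T :: "'a::euclidean_space set"
  assumes "compact S" "compact T" "S \<noteq> {}" "T \<noteq> {}" "x \<in> S"
  shows "infdist x T \<le> hausdist S T"
proof -
  have "compact ((\<lambda>x. infdist x T) ` S)"
    by (intro compact_continuous_image continuous_on_infdist continuous_on_id assms)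
  then have "bdd_above ((\<lambda>x. infdist x T) ` S)"
    by (simp add: bounded_imp_bdd_above compact_imp_bounded)
  then have "infdist x T \<le> (SUP x\<in>S. infdist x T)"
    using assms(5) by (rule cSUP_upper2) simp
  then show ?thesis using assms
    by (simp add: hausdist_def compact_imp_bounded)
qed

lemma hd2:
  fixes S T :: "'a::euclidean_space set"
  assumes "compact S" "compact T" "S \<noteq> {}" "T \<noteq> {}" "y \<in> T"
  shows "infdist y S \<le> hausdist S T"
proof -
  have "compact ((\<lambda>x. infdist x S) ` T)"
    by (intro compact_continuous_image continuous_on_infdist continuous_on_id assms)
  then have "bdd_above ((\<lambda>x. infdist x S) ` T)"
    by (simp add: bounded_imp_bdd_above compact_imp_bounded)
  then have "infdist y S \<le> (SUP x\<in>T. infdist x S)"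
    using assms(5) by (rule cSUP_upper2) simp
  then show ?thesis using assms
    by (simp add: hausdist_def compact_imp_bounded)
qed

lemma mem_limit:
  fixes L :: "'a::euclidean_space set"
  assumes P: "\<And>n. compact (P n)" "\<And>n. P n \<noteq> {}" "\<And>n. p n \<in> P n"
    and L: "compact L" "L \<noteq> {}"
    and lim: "p \<longlonglongrightarrow> x" "(\<lambda>n. hausdist (P n) L) \<longlonglongrightarrow> 0"
  shows "x \<in> L"
proof -
  have "(\<lambda>n. infdist (p n) L) \<longlonglongrightarrow> infdist x L"
    by (intro tendsto_infdist lim)
  then have "infdist x L \<le> 0"
    by (rule LIMSEQ_le[OF _ lim(2)]) (use hd1[OF P(1) L(1) P(2) L(2) P(3)] in auto)
  then have "infdist x L = 0" using infdist_nonneg[of x L] by linarith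
  then show ?thesis using L in_closed_iff_infdist_zero compact_imp_closed by blast
qed

lemma limit_connected:
  fixes L :: "'a::euclidean_space set"
  assumes P: "\<And>n. compact (P n)" "\<And>n. P n \<noteq> {}" "\<And>n. connected (P n)"
    and L: "compact L" "L \<noteq> {}"
    and lim: "(\<lambda>n. hausdist (P n) L) \<longlonglongrightarrow> 0"
  shows "connected L"
proof (rule ccontr)
  assume "\<not> connected L"
  then obtain A B where AB: "closed A" "closed B" "L \<subseteq> A \<union> B" "A \<inter> B \<inter> L = {}"
    "A \<inter> L \<noteq> {}" "B \<inter> L \<noteq> {}"
    unfolding connected_closed by blast
  define A' where "A' = A \<inter> L"
  define B' where "B' = B \<inter> L"
  have cA: "compact A'" "closed A'" "A' \<noteq> {}" using AB L unfolding A'_def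
    by (auto intro: closed_Int_compact compact_imp_closed)
  have cB: "compact B'" "closed B'" "B' \<noteq> {}" using AB L unfolding B'_def
    by (auto intro: closed_Int_compact compact_imp_closed)
  have "A' \<inter> B' = {}" using AB unfolding A'_def B'_def by auto
  define d where "d = setdist A' B'"
  have dpos: "d > 0" unfolding d_def
    using setdist_gt_0_compact_closed[OF cA(1) cB(2)] cA cB \<open>A' \<inter> B' = {}\<close> by blast
  obtain n where n: "hausdist (P n) L < d/3"
  proof -
    have "d/3 > 0" using dpos by simp
    then obtain N where "\<forall>n\<ge>N. dist (hausdist (P n) L) 0 < d/3"
      using lim unfolding LIMSEQ_def by blast
    then have "dist (hausdist (P N) L) 0 < d/3" by simp
    then show ?thesis using that[of N] by (simp add: dist_real_def abs_less_iff)
  qed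
  define U where "U = {x. infdist x A' < d/3}"
  define V where "V = {x. infdist x B' < d/3}"
  have oU: "open U" unfolding U_def
    by (rule open_Collect_less) (auto intro: continuous_intros)
  have oV: "open V" unfolding V_def
    by (rule open_Collect_less) (auto intro: continuous_intros)
  have disj: "U \<inter> V = {}"
  proof (rule ccontr)
    assume "U \<inter> V \<noteq> {}"
    then obtain x where x: "infdist x A' < d/3" "infdist x B' < d/3" unfolding U_def V_def by auto
    obtain a where a: "a \<in> A'" "infdist x A' = dist x a" using infdist_attains_inf[OF cA(2) cA(3)] by metis
    obtain b where b: "b \<in> B'" "infdist x B' = dist x b" using infdist_attains_inf[OF cB(2) cB(3)] by metis
    have "d \<le> dist a b" unfolding d_def using setdist_le_dist[OF a(1) b(1)] .
    also have "\<dots> \<le> dist x a + dist x b" by (metis dist_commute dist_triangle)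
    finally show False using x a b dpos by linarith
  qed
  have cover: "P n \<subseteq> U \<union> V"
  proof
    fix p assume p: "p \<in> P n"
    have "infdist p L < d/3" using hd1[OF P(1) L(1) P(2) L(2) p] n by linarith
    moreover obtain l where l: "l \<in> L" "infdist p L = dist p l"
      using infdist_attains_inf[OF compact_imp_closed[OF L(1)] L(2)] by metis
    ultimately have "dist p l < d/3" by simp
    moreover have "l \<in> A' \<or> l \<in> B'" using l AB unfolding A'_def B'_def by auto
    ultimately show "p \<in> U \<union> V" unfolding U_def V_def
      using infdist_le[of l A' p] infdist_le[of l B' p] by fastforce
  qed
  have neU: "U \<inter> P n \<noteq> {}"
  proof -
    obtain a where a: "a \<in> A'" using cA by auto
    have "a \<in> L" using a unfolding A'_def by auto
    have "infdist a (P n) < d/3" using hd2[OF P(1)[of n] L(1) P(2)[of n] L(2) \<open>a \<in> L\<close>] n by linarith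
    moreover obtain p where p: "p \<in> P n" "infdist a (P n) = dist a p"
      using infdist_attains_inf[OF compact_imp_closed[OF P(1)] P(2)] by metis
    ultimately have "infdist p A' < d/3" using infdist_le[OF a, of p]
      by (simp add: dist_commute)
    then show ?thesis using p unfolding U_def by auto
  qed
  have neV: "V \<inter> P n \<noteq> {}"
  proof -
    obtain a where a: "a \<in> B'" using cB by auto
    have "a \<in> L" using a unfolding B'_def by auto
    have "infdist a (P n) < d/3" using hd2[OF P(1)[of n] L(1) P(2)[of n] L(2) \<open>a \<in> L\<close>] n by linarith
    moreover obtain p where p: "p \<in> P n" "infdist a (P n) = dist a p"
      using infdist_attains_inf[OF compact_imp_closed[OF P(1)] P(2)] by metis
    ultimately have "infdist p B' < d/3" using infdist_le[OF a, of p]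
      by (simp add: dist_commute)
    then show ?thesis using p unfolding V_def by auto
  qed
  show False using P(3)[of n] oU oV cover disj neU neV unfolding connected_def by blast
qed

lemma jd2:
  fixes S T :: "(real^2) set"
  assumes "compact S" "compact T" "connected S" "connected T" "connected (- (S \<union> T))"
  shows "connected (S \<inter> T)"
proof -
  have "(UNIV::(real^2) set) homeomorphic (UNIV::complex set)"
    by (simp add: homeomorphic_UNIV_UNIV)
  then obtain f :: "real^2 \<Rightarrow> complex" and g where h: "homeomorphism UNIV UNIV f g"
    unfolding homeomorphic_def by blast
  then have fc: "continuous_on A f" and gc: "continuous_on B g" for A B
    unfolding homeomorphism_def by (auto intro: continuous_on_subset)
  have gf: "g (f x) = x" and fg: "f (g y) = y" for x y using h unfolding homeomorphism_def by auto
  have inj: "inj f" by (metis gf injI)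
  have "connected (f ` S \<inter> f ` T)"
  proof (rule Janiszewski_dual)
    show "compact (f ` S)" "compact (f ` T)" using assms fc compact_continuous_image by blast+
    show "connected (f ` S)" "connected (f ` T)" using assms fc connected_continuous_image by blast+
    have "- (f ` S \<union> f ` T) = f ` (- (S \<union> T))"
    proof -
      have "bij f" using inj fg by (metis bijI surjI)
      then show ?thesis by (simp only: bij_image_Compl_eq image_Un)
    qed
    then show "connected (- (f ` S \<union> f ` T))" using assms fc connected_continuous_image by metis
  qed
  then have "connected (g ` (f ` S \<inter> f ` T))" using gc connected_continuous_image by blast
  moreover have "g ` (f ` S \<inter> f ` T) = S \<inter> T" using gf
  proof -
    have "g ` (f ` (S \<inter> T)) = S \<inter> T" by (simp add: image_image gf)
    then show ?thesis using image_Int[OF inj, of S T] by simp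
  qed
  ultimately show ?thesis by simp
qed

lemma frontier_sep:
  fixes K :: "(real^2) set"
  assumes "closed K" "\<not> connected (- K)"
  shows "\<not> connected (- frontier K)"
proof -
  obtain A B where AB: "open A" "open B" "- K \<subseteq> A \<union> B" "A \<inter> B \<inter> - K = {}"
    "A \<inter> - K \<noteq> {}" "B \<inter> - K \<noteq> {}" using assms(2) unfolding connected_def by blast
  have fr: "- frontier K = interior K \<union> - K"
    using assms(1) interior_subset unfolding frontier_def by (auto simp: closure_closed)
  have oK: "open (- K)" using assms(1) by auto
  show ?thesis unfolding connected_def
    apply (rule notI, erule notE)
    apply (rule exI[of _ "A \<inter> - K"], rule exI[of _ "(B \<inter> - K) \<union> interior K"])
    using AB oK fr interior_subset[of K] by auto
qed

theorem mainTheorem18: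
  fixes \<alpha> \<beta> :: "nat \<Rightarrow> real \<Rightarrow> real^2"
    and L1 L2 :: "(real^2) set" and x0 x1 :: "real^2" and R :: real
  assumes arcs: "\<And>n. arc (\<alpha> n)" "\<And>n. arc (\<beta> n)"
    and inball: "\<And>n. path_image (\<alpha> n) \<subseteq> ball 0 R" "\<And>n. path_image (\<beta> n) \<subseteq> ball 0 R"
    and disj: "\<And>n. path_image (\<alpha> n) \<inter> path_image (\<beta> n) = {}"
    and L: "compact L1" "L1 \<noteq> {}" "compact L2" "L2 \<noteq> {}"
    and hconv: "(\<lambda>n. hausdist (path_image (\<alpha> n)) L1) \<longlonglongrightarrow> 0"
               "(\<lambda>n. hausdist (path_image (\<beta> n)) L2) \<longlonglongrightarrow> 0"
    and start: "(\<lambda>n. pathstart (\<alpha> n)) \<longlonglongrightarrow> x0" "(\<lambda>n. pathstart (\<beta> n)) \<longlonglongrightarrow> x0"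
    and finish: "(\<lambda>n. pathfinish (\<alpha> n)) \<longlonglongrightarrow> x1" "(\<lambda>n. pathfinish (\<beta> n)) \<longlonglongrightarrow> x1"
    and neq: "x0 \<noteq> x1"
  shows "connected_component_set (L1 \<inter> L2) x0 = connected_component_set (L1 \<inter> L2) x1
         \<or> \<not> connected (- frontier (L1 \<union> L2))"
proof -
  have pa: "\<And>n. compact (path_image (\<alpha> n))" "\<And>n. path_image (\<alpha> n) \<noteq> {}"
    "\<And>n. connected (path_image (\<alpha> n))"
    using arcs(1) by (auto intro: compact_path_image connected_path_image arc_imp_path)
  have pb: "\<And>n. compact (path_image (\<beta> n))" "\<And>n. path_image (\<beta> n) \<noteq> {}"
    "\<And>n. connected (path_image (\<beta> n))"
    using arcs(2) by (auto intro: compact_path_image connected_path_image arc_imp_path)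
  have c1: "connected L1" by (rule limit_connected[OF pa L(1,2) hconv(1)])
  have c2: "connected L2" by (rule limit_connected[OF pb L(3,4) hconv(2)])
  have x0: "x0 \<in> L1 \<inter> L2"
    using mem_limit[OF pa(1,2) _ L(1,2) start(1) hconv(1)]
          mem_limit[OF pb(1,2) _ L(3,4) start(2) hconv(2)] by auto
  have x1: "x1 \<in> L1 \<inter> L2"
    using mem_limit[OF pa(1,2) _ L(1,2) finish(1) hconv(1)]
          mem_limit[OF pb(1,2) _ L(3,4) finish(2) hconv(2)] by auto
  show ?thesis
  proof (cases "connected (L1 \<inter> L2)")
    case True
    then show ?thesis using x0 x1 connected_component_eq_self by metis
  next
    case False
    then have "\<not> connected (- (L1 \<union> L2))" using jd2 L c1 c2 by blast
    then show ?thesis using frontier_sep L by (meson closed_Un compact_imp_closed)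
  qed
qed

end
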